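(* Let $n,m$ be integers with $n\geq m\geq 0$. Then $$ gr_{3}(K_{3} : S(n,m))\geq \begin{cases} 5\cdot\frac{n}{2} +1 & \text{ if $n$ is even,}\\ 5\cdot\frac{n-1}{2} + 2 & \text{ if $n$ is odd.} \end{cases} $$
   Context: For integers $n\geq m\geq 0$, the double star $S(n,m)$ is the graph obtained from the disjoint union of the stars $K_{1,n}$ and $K_{1,m}$ by adding an edge between their centers. A $k$-coloring of a graph is an assignment of one of $k$ colors to each edge. A subgraph is rainbow if all its edges have distinct colors and monochromatic if all its edges have the same color. For graphs $G,H$ and a positive integer $k$, the Gallai–Ramsey number $gr_k(G:H)$ is the minimum integer $N$ such that every $k$-coloring of the edges of the complete graph $K_N$ contains either a rainbow copy of $G$ or a monochromatic copy of $H$. *)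

theory Defs
  imports Main
begin

text \<open>Graphs are given by their edge sets (2-element vertex sets); their vertex set is
  the union of the edges (the graphs considered have no isolated vertices).
  The complete graph K_N has vertex set {..<N}; a k-colouring assigns to every
  2-subset of {..<N} a colour in {..<k}.\<close>

definition coloring :: "nat \<Rightarrow> nat \<Rightarrow> (nat set \<Rightarrow> nat) \<Rightarrow> bool" where
  "coloring k N c \<longleftrightarrow> (\<forall>e. e \<subseteq> {..<N} \<and> card e = 2 \<longrightarrow> c e < k)"

definition rainbow_copy :: "(nat set \<Rightarrow> nat) \<Rightarrow> nat \<Rightarrow> 'a set set \<Rightarrow> bool" where
  "rainbow_copy c N G \<longleftrightarrow>
     (\<exists>f. inj_on f (\<Union>G) \<and> f ` (\<Union>G) \<subseteq> {..<N} \<and> inj_on (\<lambda>e. c (f ` e)) G)"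

definition mono_copy :: "(nat set \<Rightarrow> nat) \<Rightarrow> nat \<Rightarrow> 'a set set \<Rightarrow> bool" where
  "mono_copy c N H \<longleftrightarrow>
     (\<exists>f col. inj_on f (\<Union>H) \<and> f ` (\<Union>H) \<subseteq> {..<N} \<and> (\<forall>e\<in>H. c (f ` e) = col))"

definition gr_prop :: "nat \<Rightarrow> 'a set set \<Rightarrow> 'b set set \<Rightarrow> nat \<Rightarrow> bool" where
  "gr_prop k G H N \<longleftrightarrow>
     (\<forall>c. coloring k N c \<longrightarrow> rainbow_copy c N G \<or> mono_copy c N H)"

definition gr :: "nat \<Rightarrow> 'a set set \<Rightarrow> 'b set set \<Rightarrow> nat" where
  "gr k G H = (LEAST N. gr_prop k G H N)"

definition K3 :: "nat set set" where
  "K3 = {{0,1},{1,2},{0,2}}"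

definition double_star :: "nat \<Rightarrow> nat \<Rightarrow> nat set set" where
  "double_star n m = {{0,1}} \<union> {{0,i} | i. 2 \<le> i \<and> i < n + 2}
                               \<union> {{1,i} | i. n + 2 \<le> i \<and> i < n + m + 2}"

end

theory Submission
  imports Defs
begin

definition hc :: "nat \<Rightarrow> nat \<Rightarrow> nat" where
  "hc i j = (if i = j then 2 else if (i + 5 - j) mod 5 = 1 \<or> (j + 5 - i) mod 5 = 1 then 0 else 1)"

lemma hc_sym: "hc i j = hc j i"
  unfolding hc_def by auto

lemma hc_le: "hc i j < 3"
  unfolding hc_def by auto

lemma hc_2: "hc i j = 2 \<Longrightarrow> i = j"
  unfolding hc_def by (auto split: if_splits)

lemma no_rainbow_hc: "hc i j \<noteq> hc j k \<Longrightarrow> hc j k \<noteq> hc i k \<Longrightarrow> hc i j \<noteq> hc i k \<Longrightarrow> False"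
proof -
  assume a: "hc i j \<noteq> hc j k" "hc j k \<noteq> hc i k" "hc i j \<noteq> hc i k"
  have "hc i j = 2 \<or> hc j k = 2 \<or> hc i k = 2"
    using a hc_le[of i j] hc_le[of j k] hc_le[of i k] by linarith
  then show False
  proof (elim disjE)
    assume "hc i j = 2" then have "i = j" by (rule hc_2)
    then show False using a by simp
  next
    assume "hc j k = 2" then have "j = k" by (rule hc_2)
    then show False using a by (simp add: hc_sym)
  next
    assume "hc i k = 2" then have "i = k" by (rule hc_2)
    then show False using a by (simp add: hc_sym)
  qed
qed

lemma five_cases: "(i::nat) < 5 \<Longrightarrow> i = 0 \<or> i = 1 \<or> i = 2 \<or> i = 3 \<or> i = 4"
  by auto

lemma hc0: "i < 5 \<Longrightarrow> r < 5 \<Longrightarrow> hc i r = 0 \<Longrightarrow> r = (i+1) mod 5 \<or> r = (i+4) mod 5"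
  apply (drule five_cases, drule five_cases)
  apply (elim disjE)
  by (simp_all add: hc_def)

lemma hc1: "i < 5 \<Longrightarrow> r < 5 \<Longrightarrow> hc i r = 1 \<Longrightarrow> r = (i+2) mod 5 \<or> r = (i+3) mod 5"
  apply (drule five_cases, drule five_cases)
  apply (elim disjE)
  by (simp_all add: hc_def)

lemma hc_two: "i < 5 \<Longrightarrow> col < 2 \<Longrightarrow>
  \<exists>r1 r2. r1 < 5 \<and> r2 < 5 \<and> r1 \<noteq> r2 \<and> (\<forall>r<5. hc i r = col \<longrightarrow> r = r1 \<or> r = r2)"
proof -
  assume i: "i < 5" and c: "col < 2"
  show ?thesis
  proof (cases "col = 0")
    case True
    show ?thesis
      apply (rule exI[of _ "(i+1) mod 5"], rule exI[of _ "(i+4) mod 5"])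
      using i True hc0[of i] five_cases[OF i] by auto
  next
    case False
    then have "col = 1" using c by simp
    then show ?thesis
      apply -
      apply (rule exI[of _ "(i+2) mod 5"], rule exI[of _ "(i+3) mod 5"])
      using i hc1[of i] five_cases[OF i] by auto
  qed
qed

definition cc :: "nat set \<Rightarrow> nat" where
  "cc e = hc (Min e mod 5) (Max e mod 5)"

lemma cc_pair: "cc {x, y} = hc (x mod 5) (y mod 5)"
  unfolding cc_def by (cases "x \<le> y") (auto simp: min_def max_def hc_sym)

lemma class_card: "N \<le> 5 * K + r \<Longrightarrow> card {w. w < N \<and> w mod 5 = r} \<le> K"
proof -
  assume N: "N \<le> 5 * K + r"
  have "{w. w < N \<and> w mod 5 = r} \<subseteq> (\<lambda>k. 5 * k + r) ` {..<K}"
  proof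
    fix w assume "w \<in> {w. w < N \<and> w mod 5 = r}"
    then have w: "w < N" "w mod 5 = r" by auto
    have e: "w = 5 * (w div 5) + r" using w(2) div_mult_mod_eq[of w 5] by linarith
    then have "w div 5 < K" using w(1) N by linarith
    then show "w \<in> (\<lambda>k. 5 * k + r) ` {..<K}" using e by blast
  qed
  then have "card {w. w < N \<and> w mod 5 = r} \<le> card ((\<lambda>k. 5 * k + r) ` {..<K})"
    by (rule card_mono[rotated]) simp
  also have "\<dots> \<le> K" using card_image_le[of "{..<K}" "\<lambda>k. 5 * k + r"] by simp
  finally show ?thesis .
qed

lemma degree_bound:
  fixes n N v col :: nat
  assumes N: "N \<le> 5 * (n div 2) + n mod 2"
  shows "card {w. w < N \<and> w \<noteq> v \<and> cc {v, w} = col} \<le> n"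
proof -
  define q where "q = n div 2"
  define B where "B r = (if r = 0 then q + n mod 2 else q)" for r :: nat
  have cls: "card {w. w < N \<and> w mod 5 = r} \<le> B r" if "r < 5" for r
    apply (rule class_card)
    using N that unfolding B_def q_def by auto
  let ?S = "{w. w < N \<and> w \<noteq> v \<and> cc {v, w} = col}"
  have fin: "finite ?S" by simp
  consider "col = 2" | "col \<ge> 3" | "col < 2" by linarith
  then show ?thesis
  proof cases
    case 1
    let ?C = "{w. w < N \<and> w mod 5 = v mod 5}"
    have "?S \<subseteq> ?C - {v}" using 1 by (auto simp: cc_pair dest: hc_2)
    then have "card ?S \<le> card (?C - {v})" by (rule card_mono[rotated]) simp
    also have "\<dots> \<le> card ?C" by (rule card_Diff1_le)
    also have "\<dots> \<le> B (v mod 5)" by (rule cls) simp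
    also have "\<dots> \<le> n" unfolding B_def q_def by auto
    finally show ?thesis .
  next
    case 2
    have "cc {v,w} < 3" for w by (simp add: cc_pair hc_le)
    then have "?S = {}" using 2 by (metis (mono_tags, lifting) empty_Collect_eq not_less)
    then have "card ?S = 0" by (simp only: card.empty)
    then show ?thesis by linarith
  next
    case 3
    then obtain r1 r2 where r: "r1 \<noteq> r2" "r1 < 5" "r2 < 5" "\<forall>r<5. hc (v mod 5) r = col \<longrightarrow> r = r1 \<or> r = r2"
      using hc_two[of "v mod 5" col] by auto
    have "?S \<subseteq> {w. w < N \<and> w mod 5 = r1 mod 5} \<union> {w. w < N \<and> w mod 5 = r2 mod 5}"
    proof
      fix w assume "w \<in> ?S"
      then have "w < N" "hc (v mod 5) (w mod 5) = col" by (auto simp: cc_pair)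
      then show "w \<in> {w. w < N \<and> w mod 5 = r1 mod 5} \<union> {w. w < N \<and> w mod 5 = r2 mod 5}"
        using r(4)[rule_format, of "w mod 5"] by auto
    qed
    then have "card ?S \<le> card ({w. w < N \<and> w mod 5 = r1 mod 5} \<union> {w. w < N \<and> w mod 5 = r2 mod 5})"
      by (rule card_mono[rotated]) simp
    also have "\<dots> \<le> card {w. w < N \<and> w mod 5 = r1 mod 5} + card {w. w < N \<and> w mod 5 = r2 mod 5}"
      by (rule card_Un_le)
    also have "\<dots> \<le> B (r1 mod 5) + B (r2 mod 5)"
      using cls[of "r1 mod 5"] cls[of "r2 mod 5"] by simp
    also have "\<dots> \<le> n"
    proof -
      have "B (r1 mod 5) + B (r2 mod 5) \<le> 2 * q + n mod 2" using r unfolding B_def by auto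
      moreover have "2 * q + n mod 2 = n" unfolding q_def by presburger
      ultimately show ?thesis by linarith
    qed
    finally show ?thesis .
  qed
qed

lemma k3_no_rainbow: "\<not> rainbow_copy cc N K3"
proof
  assume "rainbow_copy cc N K3"
  then obtain f where inj: "inj_on (\<lambda>e. cc (f ` e)) K3" unfolding rainbow_copy_def by blast
  have d: "{0::nat,1} \<noteq> {1,2}" "{1::nat,2} \<noteq> {0,2}" "{0::nat,1} \<noteq> {0,2}"
    by (auto simp: doubleton_eq_iff)
  have m: "{0::nat,1} \<in> K3" "{1::nat,2} \<in> K3" "{0::nat,2} \<in> K3" unfolding K3_def by auto
  have "cc (f ` {0,1}) \<noteq> cc (f ` {1,2})" "cc (f ` {1,2}) \<noteq> cc (f ` {0,2})"
       "cc (f ` {0,1}) \<noteq> cc (f ` {0,2})"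
    using inj_onD[OF inj] m d by metis+
  then show False
    by (auto simp: cc_pair intro: no_rainbow_hc[of "f 0 mod 5" "f 1 mod 5" "f 2 mod 5"])
qed

lemma no_mono:
  fixes n m N :: nat
  assumes N: "N \<le> 5 * (n div 2) + n mod 2"
  shows "\<not> mono_copy cc N (double_star n m)"
proof
  assume "mono_copy cc N (double_star n m)"
  then obtain f col where inj: "inj_on f (\<Union>(double_star n m))"
    and rng: "f ` (\<Union>(double_star n m)) \<subseteq> {..<N}"
    and colr: "\<forall>e\<in>double_star n m. cc (f ` e) = col" unfolding mono_copy_def by blast
  have mem: "{0, i} \<in> double_star n m" if "1 \<le> i" "i \<le> n + 1" for i
    using that unfolding double_star_def by (cases "i = 1") auto
  have U: "{0..n+1} \<subseteq> \<Union>(double_star n m)"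
  proof
    fix i assume i: "i \<in> {0..n+1}"
    show "i \<in> \<Union>(double_star n m)"
    proof (cases "i = 0")
      case True
      then show ?thesis using mem[of 1] by auto
    next
      case False
      then show ?thesis using mem[of i] i by auto
    qed
  qed
  let ?v = "f 0"
  have sub: "f ` {1..n+1} \<subseteq> {w. w < N \<and> w \<noteq> ?v \<and> cc {?v, w} = col}"
  proof
    fix w assume "w \<in> f ` {1..n+1}"
    then obtain i where i: "1 \<le> i" "i \<le> n+1" "w = f i" by auto
    have "i \<in> \<Union>(double_star n m)" "0 \<in> \<Union>(double_star n m)" using U i by auto
    then have "w < N" "w \<noteq> ?v" using rng inj_onD[OF inj] i by auto
    moreover have "cc {?v, w} = col" using colr mem[OF i(1,2)] i(3) by auto
    ultimately show "w \<in> {w. w < N \<and> w \<noteq> ?v \<and> cc {?v, w} = col}" by simp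
  qed
  have "inj_on f {1..n+1}" using U by (intro inj_on_subset[OF inj]) auto
  then have "card (f ` {1..n+1}) = n + 1" by (simp add: card_image)
  moreover have "card (f ` {1..n+1}) \<le> card {w. w < N \<and> w \<noteq> ?v \<and> cc {?v, w} = col}"
    using sub by (rule card_mono[rotated]) simp
  ultimately show False using degree_bound[OF N, of ?v col] by simp
qed

theorem lemma1:
  fixes n m :: nat
  assumes "m \<le> n"
  shows "\<forall>N. gr_prop 3 K3 (double_star n m) N \<longrightarrow>
           (if even n then 5 * (n div 2) + 1 else 5 * ((n - 1) div 2) + 2) \<le> N"
proof (intro allI impI)
  fix N assume g: "gr_prop 3 K3 (double_star n m) N"
  show "(if even n then 5 * (n div 2) + 1 else 5 * ((n - 1) div 2) + 2) \<le> N"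
  proof (rule ccontr)
    assume "\<not> ?thesis"
    then have N: "N \<le> 5 * (n div 2) + n mod 2"
      by (cases "even n") (auto elim!: oddE)
    have "coloring 3 N cc" unfolding coloring_def cc_def using hc_le by auto
    then show False using g k3_no_rainbow no_mono[OF N] unfolding gr_prop_def by blast
  qed
qed

end
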